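(* Let $T_{n,j}$ denote the sum of the areas of all members of $I_{n,j}$. Then $$\sum_{n\ge1}\sum_{j=1}^n T_{n,j}\,y^j\frac{x^n}{n!}=\frac{y(1+y)}{2(1-y)^2}\ln\left(\frac{1-xy}{1-x}\right)+\frac{(4x^3y^2-8x^2y^2-4x^2y+5xy^2+8xy-x-6y+2)xy}{4(1-xy)^2(1-x)^2(1-y)}$$ $$=yx+y(3y+2)\frac{x^2}{2!}+y(11y^2+9y+7)\frac{x^3}{3!}+3y(17y^3+15y^2+13y+11)\frac{x^4}{4!}+\cdots.$$ In particular, for $n\ge1$ the sum of the areas of all members of $I_n$ is $\frac{n!}{2}\left(\binom{n+2}{2}-1\right)$.
   Context: An inversion sequence of length $n$ is a sequence $\rho=\rho_1\cdots\rho_n$ of integers with $1\le \rho_i\le i$ for all $i$. $I_n$ is the set of such sequences and $I_{n,j}$ the subset with last letter $j$. The area of $\rho$ (the area of its bargraph, whose $i$-th column has $\rho_i$ unit cells) is $\rho_1+\cdots+\rho_n$. *)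

theory Defs
  imports Complex_Main
begin

text \<open>Inversion sequences of length n, as lists r = [rho_1,...,rho_n] with
  1 \<le> rho_i \<le> i (list index i-1).\<close>
definition invseq :: "nat \<Rightarrow> nat list set" where
  "invseq n = {r. length r = n \<and> (\<forall>i<n. 1 \<le> r ! i \<and> r ! i \<le> i + 1)}"

definition invseq_last :: "nat \<Rightarrow> nat \<Rightarrow> nat list set" where
  "invseq_last n j = {r \<in> invseq n. r \<noteq> [] \<and> last r = j}"

definition area :: "nat list \<Rightarrow> nat" where
  "area r = sum_list r"

definition T :: "nat \<Rightarrow> nat \<Rightarrow> nat" where
  "T n j = (\<Sum>r\<in>invseq_last n j. area r)"

end

theory Submission
  imports Defs "HOL-Analysis.Analysis"
begin
lemma rat0:
  fixes x y :: real
  assumes px: "1 - x \<noteq> 0" and pz: "1 - x*y \<noteq> 0" and ny: "1 - y \<noteq> 0"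
  shows "y/(4*(1-y)) * (x/(1-x)) + y/(4*(1-y)) * (x/(1-x)^2)
       + (-5*y/(4*(1-y))) * ((x*y)/(1-x*y)) + (-y/(4*(1-y))) * ((x*y)/(1-x*y)^2)
     = (4*x^3*y^2 - 8*x^2*y^2 - 4*x^2*y + 5*x*y^2 + 8*x*y - x - 6*y + 2) * x * y
                / (4 * (1 - x*y)^2 * (1 - x)^2 * (1 - y))"
proof -
  have b: "x \<noteq> 1" "x*y \<noteq> 1" "y \<noteq> 1" using px pz ny by auto
  have a: "(1-x)^2 \<noteq> 0" "(1-x*y)^2 \<noteq> 0" using px pz by auto
  show ?thesis
    apply (simp add: divide_simps px pz ny a)
    apply (simp add: b algebra_simps power2_eq_square power3_eq_cube)
    done
qed



lemma invseq_0: "invseq 0 = {[]}" by (auto simp: invseq_def)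

lemma invseq_Suc: "invseq (Suc m) = (\<lambda>(r,k). r@[k]) ` (invseq m \<times> {1..Suc m})"
proof (rule set_eqI, rule iffI)
  fix r assume r: "r \<in> invseq (Suc m)"
  then have len: "length r = Suc m" by (simp add: invseq_def)
  then have rr: "r = butlast r @ [last r]"
    by (metis append_butlast_last_id list.size(3) nat.distinct(1))
  have "butlast r \<in> invseq m" using r len by (auto simp: invseq_def nth_butlast)
  moreover have "last r \<in> {1..Suc m}"
  proof -
    have "r \<noteq> []" using len by auto
    then have "last r = r ! m" using len by (simp add: last_conv_nth)
    moreover have "1 \<le> r ! m \<and> r ! m \<le> m + 1" using r by (simp add: invseq_def)
    ultimately show ?thesis by simp
  qed
  ultimately show "r \<in> (\<lambda>(r,k). r@[k]) ` (invseq m \<times> {1..Suc m})"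
    using rr by (intro image_eqI[of _ _ "(butlast r, last r)"]) auto
next
  fix r assume "r \<in> (\<lambda>(r,k). r@[k]) ` (invseq m \<times> {1..Suc m})"
  then obtain s k where "r = s@[k]" "s \<in> invseq m" "k \<in> {1..Suc m}" by auto
  then show "r \<in> invseq (Suc m)"
    by (auto simp: invseq_def nth_append less_Suc_eq)
qed

lemma inj_app: "inj_on (\<lambda>(r,k). r@[k]) X"
  by (auto simp: inj_on_def)

lemma finite_invseq: "finite (invseq n)"
  by (induction n) (auto simp: invseq_0 invseq_Suc)

lemma card_invseq: "card (invseq n) = fact n"
proof (induction n)
  case 0 then show ?case by (simp add: invseq_0)
next
  case (Suc m)
  have "card (invseq (Suc m)) = card (invseq m \<times> {1..Suc m})"
    unfolding invseq_Suc by (rule card_image[OF inj_app])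
  also have "\<dots> = fact m * Suc m" using Suc by (simp add: card_cartesian_product)
  finally show ?case by (simp add: fact_Suc)
qed

lemma gauss2: "2 * (\<Sum>k\<in>{1..n}. k) = n * Suc (n::nat)"
  by (induction n) auto

lemma area_total: "4 * (\<Sum>r\<in>invseq m. area r) = fact m * m * (m + 3)"
proof (induction m)
  case 0 then show ?case by (simp add: invseq_0 area_def)
next
  case (Suc m)
  have "(\<Sum>r\<in>invseq (Suc m). area r) = (\<Sum>p\<in>invseq m \<times> {1..Suc m}. area ((\<lambda>(r,k). r@[k]) p))"
    unfolding invseq_Suc by (rule sum.reindex[OF inj_app, unfolded comp_def])
  also have "\<dots> = (\<Sum>r\<in>invseq m. \<Sum>k\<in>{1..Suc m}. area r + k)"
    unfolding sum.cartesian_product by (rule sum.cong) (auto simp: area_def)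
  also have "\<dots> = (\<Sum>r\<in>invseq m. Suc m * area r + (\<Sum>k\<in>{1..Suc m}. k))"
    by (simp add: sum.distrib)
  also have "\<dots> = Suc m * (\<Sum>r\<in>invseq m. area r) + fact m * (\<Sum>k\<in>{1..Suc m}. k)"
    by (simp only: sum.distrib sum_distrib_left[symmetric] sum_constant card_invseq) (simp add: mult.commute)
  finally have e: "4 * (\<Sum>r\<in>invseq (Suc m). area r) = Suc m * (4 * (\<Sum>r\<in>invseq m. area r)) + 2 * fact m * (2 * (\<Sum>k\<in>{1..Suc m}. k))"
    by (simp add: algebra_simps)
  show ?case unfolding e Suc gauss2 by (simp add: fact_Suc algebra_simps)
qed

lemma invseq_last_Suc: "1 \<le> j \<Longrightarrow> j \<le> Suc m \<Longrightarrow> invseq_last (Suc m) j = (\<lambda>r. r@[j]) ` invseq m"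
  unfolding invseq_last_def invseq_Suc by auto

lemma T_Suc: "1 \<le> j \<Longrightarrow> j \<le> Suc m \<Longrightarrow> T (Suc m) j = (\<Sum>r\<in>invseq m. area r) + j * fact m"
proof -
  assume j: "1 \<le> j" "j \<le> Suc m"
  have "T (Suc m) j = (\<Sum>r\<in>invseq m. area (r@[j]))"
    unfolding T_def invseq_last_Suc[OF j] by (simp add: sum.reindex inj_on_def)
  also have "\<dots> = (\<Sum>r\<in>invseq m. area r + j)" by (simp add: area_def)
  finally show ?thesis by (simp add: sum.distrib card_invseq)
qed

lemma T_real: "1 \<le> j \<Longrightarrow> j \<le> Suc m \<Longrightarrow> real (T (Suc m) j) = fact m * (real m * (real m + 3) / 4 + real j)"
proof -
  assume j: "1 \<le> j" "j \<le> Suc m"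
  have "real (4 * (\<Sum>r\<in>invseq m. area r)) = fact m * m * (m + 3)"
    unfolding area_total by simp
  then have "real (\<Sum>r\<in>invseq m. area r) = fact m * m * (m+3) / 4" by simp
  then show ?thesis unfolding T_Suc[OF j] by (simp add: algebra_simps)
qed

lemma Tsum: "(\<Sum>j=1..Suc m. real (T (Suc m) j) * y ^ j) = (\<Sum>j=1..Suc m. fact m * (real m * (real m + 3) / 4 + real j) * y ^ j)"
  by (rule sum.cong) (auto simp: T_real)

lemma small4: "\<forall>y :: real. (\<Sum>j=1..4. real (T 4 j) * y ^ j) = 3 * y * (17*y^3 + 15*y^2 + 13*y + 11)"
  using Tsum[of 3] by (simp add: numeral_eq_Suc fact_Suc atLeastAtMostSuc_conv algebra_simps)
lemma small3: "\<forall>y :: real. (\<Sum>j=1..3. real (T 3 j) * y ^ j) = y * (11*y^2 + 9*y + 7)"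
  using Tsum[of 2] by (simp add: numeral_eq_Suc fact_Suc atLeastAtMostSuc_conv algebra_simps)
lemma small2: "\<forall>y :: real. (\<Sum>j=1..2. real (T 2 j) * y ^ j) = y * (3*y + 2)"
  using Tsum[of 1] by (simp add: numeral_eq_Suc fact_Suc atLeastAtMostSuc_conv algebra_simps)
lemma small1: "\<forall>y :: real. (\<Sum>j=1..1. real (T 1 j) * y ^ j) = y"
  using Tsum[of 0] by (simp add: numeral_eq_Suc fact_Suc atLeastAtMostSuc_conv algebra_simps)

lemma areasum: "\<forall>n::nat. n \<ge> 1 \<longrightarrow>
           real (\<Sum>r\<in>invseq n. area r) = fact n / 2 * (real ((n + 2) choose 2) - 1)"
proof (intro allI impI)
  fix n :: nat
  have a: "real (4 * (\<Sum>r\<in>invseq n. area r)) = fact n * n * (n + 3)"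
    unfolding area_total by simp
  have c: "real ((n + 2) choose 2) = (real n + 2) * (real n + 1) / 2"
  proof -
    have "2 * ((n + 2) choose 2) = (n+2)*(n+1)"
    proof -
      have e: "even ((n+2)*(n+1))" by simp
      have "(n + 2) choose 2 = (n+2)*(n+1) div 2" by (simp add: choose_two)
      then show ?thesis using e by (simp add: dvd_mult_div_cancel)
    qed
    then have "real (2 * ((n + 2) choose 2)) = real ((n+2)*(n+1))"
      by (simp only:)
    then show ?thesis by (simp add: algebra_simps)
  qed
  show "real (\<Sum>r\<in>invseq n. area r) = fact n / 2 * (real ((n + 2) choose 2) - 1)"
    using a unfolding c by (simp add: field_simps)
qed


lemma S0: "(1-y) * (\<Sum>j=1..n. y^j) = y - y^(Suc n)" for y :: real
proof (induction n)
  case (Suc n)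
  have "(1-y) * (\<Sum>j=1..Suc n. y^j) = (1-y) * (\<Sum>j=1..n. y^j) + (1-y) * y^Suc n" by (simp add: algebra_simps)
  also have "\<dots> = (y - y^Suc n) + (1-y) * y^Suc n" by (simp only: Suc.IH)
  also have "\<dots> = y - y^Suc (Suc n)" by (simp add: algebra_simps)
  finally show ?case .
qed simp

lemma S1: "(1-y)^2 * (\<Sum>j=1..n. real j * y^j) = y - (real n+1) * y^(Suc n) + real n * y^(Suc (Suc n))" for y :: real
proof (induction n)
  case (Suc n)
  have "(1-y)^2 * (\<Sum>j=1..Suc n. real j * y^j) = (1-y)^2 * (\<Sum>j=1..n. real j * y^j) + (1-y)^2 * (real (Suc n) * y^Suc n)" by (simp add: algebra_simps)
  then show ?case using Suc by (simp add: algebra_simps power2_eq_square)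
qed simp

lemma algid0:
  fixes d p q N :: real
  assumes d: "d \<noteq> 0" and N: "N > 0"
  shows "p / N * ((N-1)*(N+2)/4 * (((1-d) - (1-d)*q)/d) + ((1-d) - (N+1)*(1-d)*q + N*(1-d)^2*q)/d^2)
     = (1-d)/(4*d) * p + (1-d)/(4*d) * (N * p) + ((1-d)*(1+(1-d))/(2*d^2)) * (p/N)
       + (-5*(1-d)/(4*d)) * (p*q) + (-(1-d)/(4*d)) * (N*(p*q)) + (- ((1-d)*(1+(1-d))/(2*d^2))) * ((p*q)/N)"
  using d N by (simp add: field_simps power2_eq_square)

lemma algid:
  fixes y p q N :: real
  assumes y: "y \<noteq> 1" and N: "N > 0"
  shows "p / N * ((N-1)*(N+2)/4 * ((y - y*q)/(1-y)) + (y - (N+1)*y*q + N*y^2*q)/(1-y)^2)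
     = y/(4*(1-y)) * p + y/(4*(1-y)) * (N * p) + (y*(1+y)/(2*(1-y)^2)) * (p/N)
       + (-5*y/(4*(1-y))) * (p*q) + (-y/(4*(1-y))) * (N*(p*q)) + (- (y*(1+y)/(2*(1-y)^2))) * ((p*q)/N)"
  using algid0[of "1-y" N p q] y N by simp

lemma G: "\<bar>u\<bar> < 1 \<Longrightarrow> (\<lambda>m. u^(Suc m)) sums (u/(1-u))" for u :: real
  using sums_mult[OF geometric_sums[of u], of u] by simp

lemma D: "\<bar>u\<bar> < 1 \<Longrightarrow> (\<lambda>m. real (Suc m) * u^(Suc m)) sums (u/(1-u)^2)" for u :: real
  using sums_mult[OF geometric_deriv_sums[of u], of u] by (simp add: algebra_simps)

lemma L: "\<bar>u\<bar> < 1 \<Longrightarrow> (\<lambda>m. u^(Suc m) / real (Suc m)) sums (- ln (1-u))" for u :: real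
proof -
  assume "\<bar>u\<bar> < 1"
  then have "(\<lambda>n. - ((-(-u))^n) / of_nat n) sums ln (1 + (-u))" by (intro ln_series') simp
  then have "(\<lambda>n. u^n / real n) sums (- ln (1-u))" using sums_minus by fastforce
  then show ?thesis by (subst sums_Suc_iff) simp
qed

lemma factcancel: "(f::real) > 0 \<Longrightarrow> f * S * (p / (N * f)) = S * (p / N)"
  by (simp add: field_simps)

lemma term_Suc:
  fixes x y :: real
  assumes y: "y \<noteq> 1"
  shows "(\<Sum>j=1..Suc m. real (T (Suc m) j) * y ^ j * x ^ Suc m / fact (Suc m))
     = y/(4*(1-y)) * x^Suc m + y/(4*(1-y)) * (real (Suc m) * x^Suc m) + (y*(1+y)/(2*(1-y)^2)) * (x^Suc m / real (Suc m))
       + (-5*y/(4*(1-y))) * ((x*y)^Suc m) + (-y/(4*(1-y))) * (real (Suc m) * (x*y)^Suc m) + (- (y*(1+y)/(2*(1-y)^2))) * ((x*y)^Suc m / real (Suc m))"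
proof -
  define N where "N = real (Suc m)"
  define p where "p = x ^ Suc m"
  define q where "q = y ^ Suc m"
  have yy: "1 - y \<noteq> 0" using y by simp
  have dist: "\<And>c. (\<Sum>j=1..Suc m. (c + real j) * y^j) = c * (\<Sum>j=1..Suc m. y^j) + (\<Sum>j=1..Suc m. real j * y^j)"
    by (simp only: distrib_right sum.distrib sum_distrib_left)
  have "(\<Sum>j=1..Suc m. real (T (Suc m) j) * y ^ j * x ^ Suc m / fact (Suc m))
      = (\<Sum>j=1..Suc m. real (T (Suc m) j) * y ^ j) * (p / fact (Suc m))"
    unfolding sum_distrib_right p_def by (rule sum.cong) auto
  also have "\<dots> = (\<Sum>j=1..Suc m. fact m * (real m * (real m + 3) / 4 + real j) * y ^ j) * (p / fact (Suc m))"
    by (simp only: Tsum)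
  also have "\<dots> = fact m * (\<Sum>j=1..Suc m. (real m * (real m + 3) / 4 + real j) * y ^ j) * (p / fact (Suc m))"
    by (simp only: sum_distrib_left mult.assoc)
  also have "\<dots> = (\<Sum>j=1..Suc m. (real m * (real m + 3) / 4 + real j) * y ^ j) * (p / N)"
    unfolding fact_Suc N_def of_nat_mult by (rule factcancel) simp
  also have "\<dots> = p / N * ((real m * (real m + 3) / 4) * (\<Sum>j=1..Suc m. y ^ j) + (\<Sum>j=1..Suc m. real j * y ^ j))"
    unfolding dist by (rule mult.commute)
  also have "real m * (real m + 3) / 4 = (N-1)*(N+2)/4" by (simp add: N_def algebra_simps)
  also have "(\<Sum>j=1..Suc m. y ^ j) = (y - y*q)/(1-y)"
  proof -
    have h: "(1-y) * (\<Sum>j=1..Suc m. y ^ j) = y - y*q" unfolding S0 q_def by simp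
    show ?thesis by (metis h yy nonzero_mult_div_cancel_left)
  qed
  also have "(\<Sum>j=1..Suc m. real j * y ^ j) = (y - (N+1)*y*q + N*y^2*q)/(1-y)^2"
  proof -
    have h: "(1-y)^2 * (\<Sum>j=1..Suc m. real j * y ^ j) = y - (N+1)*y*q + N*y^2*q"
      unfolding S1 q_def N_def by (simp add: power2_eq_square)
    have yy2: "(1-y)^2 \<noteq> 0" using yy by simp
    show ?thesis by (metis h yy2 nonzero_mult_div_cancel_left)
  qed
  also have "p / N * ((N-1)*(N+2)/4 * ((y - y*q)/(1-y)) + (y - (N+1)*y*q + N*y^2*q)/(1-y)^2)
     = y/(4*(1-y)) * p + y/(4*(1-y)) * (N * p) + (y*(1+y)/(2*(1-y)^2)) * (p/N)
       + (-5*y/(4*(1-y))) * (p*q) + (-y/(4*(1-y))) * (N*(p*q)) + (- (y*(1+y)/(2*(1-y)^2))) * ((p*q)/N)"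
    by (rule algid[OF y]) (simp add: N_def)
  finally show ?thesis unfolding p_def q_def N_def power_mult_distrib .
qed

lemma main_series:
  "\<forall>x y :: real. \<bar>x\<bar> < 1 \<longrightarrow> \<bar>y\<bar> < 1 \<longrightarrow>
           (\<lambda>n. \<Sum>j=1..n. real (T n j) * y ^ j * x ^ n / fact n) sums
             (y * (1 + y) / (2 * (1 - y)^2) * ln ((1 - x * y) / (1 - x))
              + (4*x^3*y^2 - 8*x^2*y^2 - 4*x^2*y + 5*x*y^2 + 8*x*y - x - 6*y + 2) * x * y
                / (4 * (1 - x*y)^2 * (1 - x)^2 * (1 - y)))"
proof (intro allI impI)
  fix x y :: real
  assume x: "\<bar>x\<bar> < 1" and y: "\<bar>y\<bar> < 1"
  have z: "\<bar>x*y\<bar> < 1"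
  proof -
    have "\<bar>x\<bar> * \<bar>y\<bar> \<le> \<bar>x\<bar>" using y by (intro mult_left_le) auto
    then show ?thesis using x by (simp add: abs_mult)
  qed
  have y1: "y \<noteq> 1" using y by auto
  define K where "K = y*(1+y)/(2*(1-y)^2)"
  have S: "(\<lambda>m. \<Sum>j=1..Suc m. real (T (Suc m) j) * y ^ j * x ^ Suc m / fact (Suc m)) sums
     (y/(4*(1-y)) * (x/(1-x)) + y/(4*(1-y)) * (x/(1-x)^2) + K * (- ln (1-x))
       + (-5*y/(4*(1-y))) * ((x*y)/(1-x*y)) + (-y/(4*(1-y))) * ((x*y)/(1-x*y)^2) + (-K) * (- ln (1 - x*y)))"
    unfolding term_Suc[OF y1] K_def[symmetric]
    by (intro sums_add sums_mult G D L x z)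
  define E where "E = y * (1 + y) / (2 * (1 - y)^2) * ln ((1 - x * y) / (1 - x))
              + (4*x^3*y^2 - 8*x^2*y^2 - 4*x^2*y + 5*x*y^2 + 8*x*y - x - 6*y + 2) * x * y
                / (4 * (1 - x*y)^2 * (1 - x)^2 * (1 - y))"
  have px: "1 - x > 0" using x by auto
  have pz: "1 - x*y > 0" using z by auto
  have lnd: "ln ((1 - x * y) / (1 - x)) = ln (1 - x*y) - ln (1 - x)"
    using px pz by (simp add: ln_div)
  have ny: "1 - y \<noteq> 0" using y1 by simp
  have rat: "y/(4*(1-y)) * (x/(1-x)) + y/(4*(1-y)) * (x/(1-x)^2)
       + (-5*y/(4*(1-y))) * ((x*y)/(1-x*y)) + (-y/(4*(1-y))) * ((x*y)/(1-x*y)^2)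
     = (4*x^3*y^2 - 8*x^2*y^2 - 4*x^2*y + 5*x*y^2 + 8*x*y - x - 6*y + 2) * x * y
                / (4 * (1 - x*y)^2 * (1 - x)^2 * (1 - y))"
    using px pz ny by (intro rat0) auto
  have "(y/(4*(1-y)) * (x/(1-x)) + y/(4*(1-y)) * (x/(1-x)^2) + K * (- ln (1-x))
       + (-5*y/(4*(1-y))) * ((x*y)/(1-x*y)) + (-y/(4*(1-y))) * ((x*y)/(1-x*y)^2) + (-K) * (- ln (1 - x*y))) = E"
    unfolding E_def lnd K_def[symmetric] rat[symmetric] by (simp add: algebra_simps)
  with S have "(\<lambda>m. \<Sum>j=1..Suc m. real (T (Suc m) j) * y ^ j * x ^ Suc m / fact (Suc m)) sums E" by simp
  then show "(\<lambda>n. \<Sum>j=1..n. real (T n j) * y ^ j * x ^ n / fact n) sums E"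
    by (subst (asm) sums_Suc_iff) simp
qed

theorem corollary2p3:
  shows "(\<forall>x y :: real. \<bar>x\<bar> < 1 \<longrightarrow> \<bar>y\<bar> < 1 \<longrightarrow>
           (\<lambda>n. \<Sum>j=1..n. real (T n j) * y ^ j * x ^ n / fact n) sums
             (y * (1 + y) / (2 * (1 - y)^2) * ln ((1 - x * y) / (1 - x))
              + (4*x^3*y^2 - 8*x^2*y^2 - 4*x^2*y + 5*x*y^2 + 8*x*y - x - 6*y + 2) * x * y
                / (4 * (1 - x*y)^2 * (1 - x)^2 * (1 - y))))
      \<and> (\<forall>y :: real. (\<Sum>j=1..1. real (T 1 j) * y ^ j) = y)
      \<and> (\<forall>y :: real. (\<Sum>j=1..2. real (T 2 j) * y ^ j) = y * (3*y + 2))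
      \<and> (\<forall>y :: real. (\<Sum>j=1..3. real (T 3 j) * y ^ j) = y * (11*y^2 + 9*y + 7))
      \<and> (\<forall>y :: real. (\<Sum>j=1..4. real (T 4 j) * y ^ j) = 3 * y * (17*y^3 + 15*y^2 + 13*y + 11))
      \<and> (\<forall>n::nat. n \<ge> 1 \<longrightarrow>
           real (\<Sum>r\<in>invseq n. area r) = fact n / 2 * (real ((n + 2) choose 2) - 1))"
  using main_series small1 small2 small3 small4 areasum by blast

end
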